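(* Let $L\ge2$ and let $[0,1]^2=S_0\supset S_1\supset\cdots$ be such that each $S_n$ is the union of $L^n$ squares of $\mathcal{D}_n$, one from each column; let $\mathcal{S}_n=\{Q\in\mathcal{D}_n:Q\subset S_n\}$. There is a constant $C$ depending only on $L$ such that for all $n$ and all $i,j\in\{1,\dots,n\}$, \[ \#\bigl\{(Q,Q')\in\mathcal{S}_n\times\mathcal{S}_n:\ |x(Q)-x(Q')|\le L^{-i},\ |y(Q)-y(Q')|\ge L^{-j}\bigr\}\le C\,L^{2n+j-2i}. \]
   Context: $\mathcal{D}_n$ is the set of closed squares obtained by dividing $[0,1]^2$ into an $L^n\times L^n$ grid. For $Q\in\mathcal{D}_n$, $(x(Q),y(Q))$ denotes the lower-left corner of $Q$. *)

theory Defs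
  imports Complex_Main
begin

definition grid_square :: "nat \<Rightarrow> nat \<Rightarrow> nat \<Rightarrow> nat \<Rightarrow> (real \<times> real) set" where
  "grid_square L n a b =
     {real a / real L ^ n .. (real a + 1) / real L ^ n} \<times>
     {real b / real L ^ n .. (real b + 1) / real L ^ n}"

definition gridD :: "nat \<Rightarrow> nat \<Rightarrow> (real \<times> real) set set" where
  "gridD L n = {grid_square L n a b | a b. a < L ^ n \<and> b < L ^ n}"

definition xQ :: "(real \<times> real) set \<Rightarrow> real" where
  "xQ Q = Inf (fst ` Q)"

definition yQ :: "(real \<times> real) set \<Rightarrow> real" where
  "yQ Q = Inf (snd ` Q)"

definition one_per_column :: "nat \<Rightarrow> nat \<Rightarrow> (real \<times> real) set \<Rightarrow> bool" where
  "one_per_column L n S \<longleftrightarrow>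
     (\<exists>f. (\<forall>a<L ^ n. f a < L ^ n) \<and> S = (\<Union>a<L ^ n. grid_square L n a (f a)))"

end

theory Submission imports Defs begin

lemma mem_gs: "(x, y) \<in> grid_square L n a b \<longleftrightarrow>
  real a / real L ^ n \<le> x \<and> x \<le> (real a + 1) / real L ^ n \<and>
  real b / real L ^ n \<le> y \<and> y \<le> (real b + 1) / real L ^ n"
  by (auto simp: grid_square_def)

lemma xQ_gs: assumes "L > 0" shows "xQ (grid_square L n a b) = real a / real L ^ n"
proof -
  have ne: "{real b / real L ^ n .. (real b + 1) / real L ^ n} \<noteq> {}"
    using assms by (simp add: divide_right_mono)
  have "fst ` grid_square L n a b = {real a / real L ^ n .. (real a + 1) / real L ^ n}"
    unfolding grid_square_def using ne by auto
  moreover have "real a / real L ^ n \<le> (real a + 1) / real L ^ n"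
    using assms by (simp add: divide_right_mono)
  ultimately show ?thesis unfolding xQ_def by simp
qed

lemma yQ_gs: assumes "L > 0" shows "yQ (grid_square L n a b) = real b / real L ^ n"
proof -
  have ne: "{real a / real L ^ n .. (real a + 1) / real L ^ n} \<noteq> {}"
    using assms by (simp add: divide_right_mono)
  have "snd ` grid_square L n a b = {real b / real L ^ n .. (real b + 1) / real L ^ n}"
    unfolding grid_square_def using ne by auto
  moreover have "real b / real L ^ n \<le> (real b + 1) / real L ^ n"
    using assms by (simp add: divide_right_mono)
  ultimately show ?thesis unfolding yQ_def by simp
qed

lemma oneD:
  assumes L: "L > 0" and kn: "k \<le> n"
    and h1: "real c / real L ^ k \<le> (real u + 1/2) / real L ^ n"
    and h2: "(real u + 1/2) / real L ^ n \<le> (real c + 1) / real L ^ k"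
  shows "u div L ^ (n - k) = c"
proof -
  define M where "M = L ^ (n - k)"
  have Ln: "real L ^ n = real L ^ k * real M"
    using kn by (simp add: M_def flip: power_add)
  have Lk: "real L ^ k > 0" using L by simp
  have Mp: "real M > 0" using L by (simp add: M_def)
  have "real c * real M \<le> real u + 1/2"
    using h1 Lk Mp unfolding Ln by (simp add: field_simps)
  hence a: "M * c \<le> u"
  proof -
    assume "real c * real M \<le> real u + 1/2"
    hence "real (c * M) < real u + 1" by simp
    hence "c * M < u + 1" by linarith
    thus ?thesis by (simp add: mult.commute)
  qed
  have "(real u + 1/2) / real L ^ n * real L ^ n \<le> (real c + 1) / real L ^ k * real L ^ n"
    using h2 Lk by (intro mult_right_mono) auto
  hence "real u + 1/2 \<le> (real c + 1) * real M"
    using L Mp unfolding Ln by simp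
  hence "real u < real ((c + 1) * M)" by (simp add: algebra_simps)
  hence b: "u < M * Suc c" by (simp only: of_nat_less_iff) (simp add: mult.commute)
  show ?thesis unfolding M_def[symmetric] by (rule div_nat_eqI[OF a b])
qed

lemma inv_pow: assumes "L > 0" "i \<le> n"
  shows "1 / real L ^ i = real (L ^ (n - i)) / real L ^ n"
proof -
  have "real L ^ n = real L ^ i * real L ^ (n - i)" using assms(2) by (simp flip: power_add)
  thus ?thesis using assms(1) by simp
qed

lemma scale_le: assumes "L > 0" "i \<le> n"
  and "\<bar>real a / real L ^ n - real a' / real L ^ n\<bar> \<le> 1 / real L ^ i"
  shows "a \<le> a' + L ^ (n - i) \<and> a' \<le> a + L ^ (n - i)"
proof -
  have N: "real L ^ n > 0" using assms(1) by simp
  have "\<bar>real a - real a'\<bar> / real L ^ n \<le> real (L ^ (n - i)) / real L ^ n"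
    using assms(3) unfolding inv_pow[OF assms(1,2)] by (simp add: diff_divide_distrib[symmetric])
  hence "\<bar>real a - real a'\<bar> \<le> real (L ^ (n - i))" using N assms(1) by (simp add: divide_le_cancel)
  hence "real a \<le> real (a' + L ^ (n - i)) \<and> real a' \<le> real (a + L ^ (n - i))" by (simp only: of_nat_add) linarith
  thus ?thesis by (simp only: of_nat_le_iff)
qed

lemma scale_ge: assumes "L > 0" "j \<le> n"
  and "1 / real L ^ j \<le> \<bar>real b / real L ^ n - real b' / real L ^ n\<bar>"
  shows "b + L ^ (n - j) \<le> b' \<or> b' + L ^ (n - j) \<le> b"
proof -
  have N: "real L ^ n > 0" using assms(1) by simp
  have "real (L ^ (n - j)) / real L ^ n \<le> \<bar>real b - real b'\<bar> / real L ^ n"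
    using assms(3) unfolding inv_pow[OF assms(1,2)] by (simp add: diff_divide_distrib[symmetric])
  hence "real (L ^ (n - j)) \<le> \<bar>real b - real b'\<bar>" using N assms(1) by (simp add: divide_le_cancel)
  hence "real (b + L ^ (n - j)) \<le> real b' \<or> real (b' + L ^ (n - j)) \<le> real b" by linarith
  thus ?thesis by (simp only: of_nat_le_iff)
qed

lemma midpt: assumes "L > 0"
  shows "((real a + 1/2) / real L ^ n, (real b + 1/2) / real L ^ n) \<in> grid_square L n a b"
  using assms by (simp add: mem_gs divide_right_mono)

lemma lt_div: "(M::nat) > 0 \<Longrightarrow> x < M * (x div M) + M"
proof -
  assume "M > 0"
  hence "x mod M < M" by simp
  moreover have "M * (x div M) + x mod M = x" by (rule mult_div_mod_eq)
  ultimately show ?thesis by linarith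
qed

lemma count1:
  assumes "P \<subseteq> {(a, a'). a < N \<and> a \<le> a' + D \<and> a' \<le> a + D}"
  shows "finite P \<and> card P \<le> N * (2 * D + 1)"
proof -
  have sub: "P \<subseteq> (\<Union>a<N. {a} \<times> {a - D .. a + D})" using assms by auto
  have fin: "finite (\<Union>a<N. {a} \<times> {a - D .. a + D})" by auto
  have "card (\<Union>a<N. {a} \<times> {a - D .. a + D}) \<le> (\<Sum>a<N. card ({a} \<times> {a - D .. a + D}))"
    by (rule card_UN_le) simp
  also have "\<dots> \<le> (\<Sum>a<N. 2 * D + 1)"
    by (intro sum_mono) (simp add: card_cartesian_product)
  also have "\<dots> = N * (2 * D + 1)" by simp
  finally show ?thesis using card_mono[OF fin sub] finite_subset[OF sub fin] by simp
qed

lemma count2: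
  assumes "P \<subseteq> (\<Union>m<K. {m * M - D ..< m * M} \<times> {m * M ..< m * M + D} \<union>
                              {m * M ..< m * M + D} \<times> {m * M - D ..< m * M})"
  shows "finite P \<and> card P \<le> K * (2 * D * D)"
proof -
  let ?U = "(\<Union>m<K. {m * M - D ..< m * M} \<times> {m * M ..< m * M + D} \<union>
                              {m * M ..< m * M + D} \<times> {m * M - D ..< m * M})"
  have fin: "finite ?U" by auto
  have "card ?U \<le> (\<Sum>m<K. card ({m * M - D ..< m * M} \<times> {m * M ..< m * M + D} \<union>
                              {m * M ..< m * M + D} \<times> {m * M - D ..< m * M}))"
    by (rule card_UN_le) simp
  also have "\<dots> \<le> (\<Sum>m<K. 2 * D * D)"
  proof (intro sum_mono)
    fix m
    have c1: "card {m * M - D ..< m * M} \<le> D" by simp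
    have "card ({m * M - D ..< m * M} \<times> {m * M ..< m * M + D} \<union>
                              {m * M ..< m * M + D} \<times> {m * M - D ..< m * M})
          \<le> card ({m * M - D ..< m * M} \<times> {m * M ..< m * M + D}) + card ({m * M ..< m * M + D} \<times> {m * M - D ..< m * M})"
      by (rule card_Un_le)
    also have "\<dots> = 2 * card {m * M - D ..< m * M} * D" by (simp add: card_cartesian_product)
    also have "\<dots> \<le> 2 * D * D" using c1 by simp
    finally show "card ({m * M - D ..< m * M} \<times> {m * M ..< m * M + D} \<union>
                              {m * M ..< m * M + D} \<times> {m * M - D ..< m * M}) \<le> 2 * D * D" .
  qed
  also have "\<dots> = K * (2 * D * D)" by simp
  finally show ?thesis using card_mono[OF fin assms] finite_subset[OF assms fin] by simp
qed

theorem lemmaA2: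
  fixes L :: nat
  assumes "L \<ge> 2"
  shows "\<exists>C::real. \<forall>S :: nat \<Rightarrow> (real \<times> real) set.
    S 0 = {0..1} \<times> {0..1} \<and> (\<forall>n. S (Suc n) \<subseteq> S n) \<and> (\<forall>n. one_per_column L n (S n)) \<longrightarrow>
    (\<forall>n i j. 1 \<le> i \<and> i \<le> n \<and> 1 \<le> j \<and> j \<le> n \<longrightarrow>
      real (card {(Q, Q'). Q \<in> {Q \<in> gridD L n. Q \<subseteq> S n} \<and> Q' \<in> {Q \<in> gridD L n. Q \<subseteq> S n} \<and>
                  \<bar>xQ Q - xQ Q'\<bar> \<le> 1 / real L ^ i \<and> \<bar>yQ Q - yQ Q'\<bar> \<ge> 1 / real L ^ j})
      \<le> C * real L powi (2 * int n + int j - 2 * int i))"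
proof (rule exI[of _ "real (2 * L + 3)"], intro allI impI, elim conjE)
  fix S :: "nat \<Rightarrow> (real \<times> real) set" and n i j :: nat
  assume S0: "S 0 = {0..1} \<times> {0..1}" and dec: "\<forall>n. S (Suc n) \<subseteq> S n"
    and opc: "\<forall>n. one_per_column L n (S n)" and ij1: "1 \<le> i" and ij2: "i \<le> n" and ij3: "1 \<le> j" and ij4: "j \<le> n"
  have ij: "1 \<le> i \<and> i \<le> n \<and> 1 \<le> j \<and> j \<le> n" using ij1 ij2 ij3 ij4 by simp
  have L0: "L > 0" using assms by simp
  have "\<forall>k. \<exists>f. (\<forall>a<L ^ k. f a < L ^ k) \<and> S k = (\<Union>a<L ^ k. grid_square L k a (f a))"
    using opc unfolding one_per_column_def by blast
  then obtain F where F: "\<And>k. (\<forall>a<L ^ k. F k a < L ^ k) \<and> S k = (\<Union>a<L ^ k. grid_square L k a (F k a))"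
    by metis
  have mono: "S m \<subseteq> S k" if "k \<le> m" for k m
    using lift_Suc_antimono_le[of S, OF _ that] dec by blast
  have gen: "a div L ^ (m - k) < L ^ k \<and> F k (a div L ^ (m - k)) = b div L ^ (m - k)"
    if km: "k \<le> m" and pin: "((real a + 1/2) / real L ^ m, (real b + 1/2) / real L ^ m) \<in> S k"
    for k m a b
  proof -
    from pin F[of k] obtain c where c: "c < L ^ k"
      and cin: "((real a + 1/2) / real L ^ m, (real b + 1/2) / real L ^ m) \<in> grid_square L k c (F k c)"
      by auto
    have "a div L ^ (m - k) = c"
      using cin by (intro oneD[OF L0 km]) (auto simp: mem_gs)
    moreover have "b div L ^ (m - k) = F k c"
      using cin by (intro oneD[OF L0 km]) (auto simp: mem_gs)
    ultimately show ?thesis using c by simp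
  qed
  have sel: "\<exists>a<L ^ n. Q = grid_square L n a (F n a)"
    if "Q \<in> gridD L n" "Q \<subseteq> S n" for Q
  proof -
    from that(1) obtain a b where ab: "a < L ^ n" "Q = grid_square L n a b"
      unfolding gridD_def by blast
    have "((real a + 1/2) / real L ^ n, (real b + 1/2) / real L ^ n) \<in> S n"
      using that(2) midpt[OF L0, of a n b] ab by blast
    from gen[OF order_refl this] have "F n a = b" by simp
    thus ?thesis using ab by blast
  qed
  have compat: "F n a div L ^ (n - k) = F k (a div L ^ (n - k))" if "k \<le> n" "a < L ^ n" for k a
  proof -
    have "grid_square L n a (F n a) \<subseteq> S n" using F[of n] that(2) by blast
    hence "((real a + 1/2) / real L ^ n, (real (F n a) + 1/2) / real L ^ n) \<in> S k"
      using midpt[OF L0, of a n "F n a"] mono[OF that(1)] by blast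
    from gen[OF that(1) this] show ?thesis by simp
  qed
  define D where "D = L ^ (n - i)"
  define E where "E = L ^ (n - j)"
  define P where "P = {(a, a'). a < L ^ n \<and> a' < L ^ n \<and> a \<le> a' + D \<and> a' \<le> a + D \<and>
                         (F n a + E \<le> F n a' \<or> F n a' + E \<le> F n a)}"
  define G where "G = (\<lambda>(a, a'). (grid_square L n a (F n a), grid_square L n a' (F n a')))"
  let ?T = "{(Q, Q'). Q \<in> {Q \<in> gridD L n. Q \<subseteq> S n} \<and> Q' \<in> {Q \<in> gridD L n. Q \<subseteq> S n} \<and>
                  \<bar>xQ Q - xQ Q'\<bar> \<le> 1 / real L ^ i \<and> \<bar>yQ Q - yQ Q'\<bar> \<ge> 1 / real L ^ j}"
  have TP: "?T \<subseteq> G ` P"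
  proof
    fix z assume "z \<in> ?T"
    then obtain Q Q' where z: "z = (Q, Q')" and Q: "Q \<in> gridD L n" "Q \<subseteq> S n"
      and Q': "Q' \<in> gridD L n" "Q' \<subseteq> S n"
      and cx: "\<bar>xQ Q - xQ Q'\<bar> \<le> 1 / real L ^ i" and cy: "\<bar>yQ Q - yQ Q'\<bar> \<ge> 1 / real L ^ j"
      by blast
    obtain a where a: "a < L ^ n" "Q = grid_square L n a (F n a)" using sel[OF Q] by blast
    obtain a' where a': "a' < L ^ n" "Q' = grid_square L n a' (F n a')" using sel[OF Q'] by blast
    have "a \<le> a' + D \<and> a' \<le> a + D"
      using scale_le[OF L0, of i n a a'] cx ij unfolding a(2) a'(2) D_def by (simp add: xQ_gs[OF L0])
    moreover have "F n a + E \<le> F n a' \<or> F n a' + E \<le> F n a"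
      using scale_ge[OF L0, of j n "F n a" "F n a'"] cy ij unfolding a(2) a'(2) E_def by (simp add: yQ_gs[OF L0])
    ultimately have "(a, a') \<in> P" using a a' unfolding P_def by blast
    moreover have "z = G (a, a')" using z a a' unfolding G_def by simp
    ultimately show "z \<in> G ` P" by blast
  qed
  have key: "finite P \<and> card P \<le> (2 * L + 3) * L ^ (2 * n + j - 2 * i)"
  proof (cases "i \<le> j")
    case True
    have "P \<subseteq> {(a, a'). a < L ^ n \<and> a \<le> a' + D \<and> a' \<le> a + D}" unfolding P_def by auto
    from count1[OF this] have c: "finite P" "card P \<le> L ^ n * (2 * D + 1)" by auto
    have D1: "D \<ge> 1" unfolding D_def using L0 by simp
    have "2 * D + 1 \<le> 3 * D" using D1 by linarith
    hence "L ^ n * (2 * D + 1) \<le> L ^ n * (3 * D)" by (rule mult_le_mono2)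
    also have "\<dots> = 3 * (L ^ n * D)" by simp
    also have "L ^ n * D = L ^ (n + (n - i))" unfolding D_def by (simp add: power_add)
    also have "\<dots> \<le> L ^ (2 * n + j - 2 * i)"
      using L0 True ij by (intro power_increasing) linarith+
    finally have "card P \<le> 3 * L ^ (2 * n + j - 2 * i)" using c by linarith
    also have "\<dots> \<le> (2 * L + 3) * L ^ (2 * n + j - 2 * i)" by simp
    finally show ?thesis using c by simp
  next
    case False
    define k where "k = Suc j"
    define M where "M = L ^ (n - k)"
    have kn: "k \<le> n" using False ij unfolding k_def by simp
    have M0: "M > 0" unfolding M_def using L0 by simp
    have nj: "n - j = Suc (n - k)" using kn unfolding k_def by simp
    have EM: "E = L * M" unfolding E_def M_def nj by simp
    have LnM: "L ^ n = L ^ k * M" unfolding M_def using kn by (simp flip: power_add)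
    have "P \<subseteq> (\<Union>m<L ^ k. {m * M - D ..< m * M} \<times> {m * M ..< m * M + D} \<union>
                              {m * M ..< m * M + D} \<times> {m * M - D ..< m * M})"
    proof
      fix z assume "z \<in> P"
      then obtain a a' where z: "z = (a, a')" and a: "a < L ^ n" and a': "a' < L ^ n"
        and d1: "a \<le> a' + D" and d2: "a' \<le> a + D"
        and fy: "F n a + E \<le> F n a' \<or> F n a' + E \<le> F n a"
        unfolding P_def by blast
      have neq: "a div M \<noteq> a' div M"
      proof
        assume eq: "a div M = a' div M"
        have q: "F n a' div M = F n a div M"
          using compat[OF kn a] compat[OF kn a'] eq unfolding M_def by simp
        define q where "q = F n a div M"
        have h1: "M * q \<le> F n a" "F n a < M * q + M"
          unfolding q_def using M0 by (simp_all add: times_div_less_eq_dividend lt_div)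
        have h2: "M * q \<le> F n a'" "F n a' < M * q + M"
          unfolding q_def q[symmetric] using M0 by (simp_all add: times_div_less_eq_dividend lt_div)
        have h3: "M \<le> E" unfolding EM using L0 by simp
        from fy show False
        proof
          assume "F n a + E \<le> F n a'" thus False using h1 h2 h3 by linarith
        next
          assume "F n a' + E \<le> F n a" thus False using h1 h2 h3 by linarith
        qed
      qed
      have gen2: "(x, y) \<in> {m * M - D ..< m * M} \<times> {m * M ..< m * M + D}
            \<and> m < L ^ k"
        if xy: "x div M < y div M" "x \<le> y + D" "y \<le> x + D" "y < L ^ n" and m: "m = y div M"
        for x y m
      proof -
        have "x < M * (x div M) + M" using M0 by (rule lt_div)
        also have "M * (x div M) + M = M * (x div M + 1)" by simp
        also have "\<dots> \<le> M * m" using xy(1) m by (intro mult_le_mono2) simp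
        finally have x1: "x < m * M" by (simp add: mult.commute)
        have y1: "m * M \<le> y" unfolding m using M0 by (simp add: mult.commute times_div_less_eq_dividend)
        have "m < L ^ k"
        proof (rule ccontr)
          assume "\<not> m < L ^ k"
          hence "L ^ k * M \<le> m * M" by simp
          thus False using y1 xy(4) LnM by linarith
        qed
        moreover have "m * M - D \<le> x" using y1 xy(3) by linarith
        moreover have "y < m * M + D" using x1 xy(3) by linarith
        ultimately show ?thesis using x1 y1 by simp
      qed
      have "a div M \<le> a' div M \<or> a' div M \<le> a div M" by linarith
      hence "a div M < a' div M \<or> a' div M < a div M" using neq by linarith
      thus "z \<in> (\<Union>m<L ^ k. {m * M - D ..< m * M} \<times> {m * M ..< m * M + D} \<union>
                              {m * M ..< m * M + D} \<times> {m * M - D ..< m * M})"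
      proof
        assume "a div M < a' div M"
        from gen2[OF this d1 d2 a' refl] show ?thesis unfolding z by blast
      next
        assume "a' div M < a div M"
        from gen2[OF this d2 d1 a refl] show ?thesis unfolding z by blast
      qed
    qed
    from count2[OF this] have c: "finite P" "card P \<le> L ^ k * (2 * D * D)" by auto
    have "L ^ k * (2 * D * D) = 2 * L ^ (k + (n - i) + (n - i))" unfolding D_def by (simp add: power_add)
    also have "k + (n - i) + (n - i) = Suc (2 * n + j - 2 * i)" using ij False unfolding k_def by simp
    also have "2 * L ^ Suc (2 * n + j - 2 * i) = (2 * L) * L ^ (2 * n + j - 2 * i)" by simp
    also have "\<dots> \<le> (2 * L + 3) * L ^ (2 * n + j - 2 * i)" by (intro mult_le_mono1) simp
    finally show ?thesis using c by simp
  qed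
  have "card ?T \<le> card (G ` P)"
    using TP key by (intro card_mono) auto
  also have "\<dots> \<le> card P" by (rule card_image_le) (use key in auto)
  finally have "card ?T \<le> (2 * L + 3) * L ^ (2 * n + j - 2 * i)" using key by linarith
  hence "real (card ?T) \<le> real ((2 * L + 3) * L ^ (2 * n + j - 2 * i))"
    by (simp only: of_nat_le_iff)
  hence "real (card ?T) \<le> real (2 * L + 3) * real L ^ (2 * n + j - 2 * i)"
    by (simp only: of_nat_mult of_nat_power)
  moreover have ex: "2 * int n + int j - 2 * int i = int (2 * n + j - 2 * i)" using ij by simp
  ultimately show "real (card ?T) \<le> real (2 * L + 3) * real L powi (2 * int n + int j - 2 * int i)"
    by (simp only: ex power_int_of_nat)
qed

end
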